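(* Let $\kappa,\lambda$ be infinite cardinals, $\alpha\leq\kappa^+$ an uncountable cardinal and $\beta\leq\lambda^+$ an infinite cardinal. If there is an injective group homomorphism $j:P(\kappa,\alpha)\to P(\lambda,\beta)$, then, writing $j_\nu=p_\nu\circ j$ for $\nu\in\lambda$ (where $p_\nu$ is the $\nu$-th coordinate projection) and $F_\nu=\{\xi\in\kappa:j_\nu(e_\xi)\neq0\}$, each $F_\nu$ is finite and $\kappa\leq|\{\nu\in\lambda:F_\nu\neq\varnothing\}|$; in particular $\kappa\leq\lambda$.
   Context: $\mathbb{Z}^\kappa$ is the group of functions $x:\kappa\to\mathbb{Z}$ under pointwise addition, $\mathrm{supp}(x)=\{\xi\in\kappa:x(\xi)\neq0\}$, and $P(\kappa,\alpha)=\{x\in\mathbb{Z}^\kappa:|\mathrm{supp}(x)|<\alpha\}$. For $\xi\in\kappa$, $e_\xi$ is the function with $e_\xi(\xi)=1$ and $e_\xi(\eta)=0$ for $\eta\neq\xi$. For $\nu\in\lambda$, $p_\nu:P(\lambda,\beta)\to\mathbb{Z}$ is $p_\nu(y)=y(\nu)$. *)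

theory Defs
  imports Main
begin

text \<open>Elements of Z^K are modelled as functions x :: 'a => int vanishing outside K.
Cardinals alpha, beta are cardinal-order relations (Card_order), compared via ordLess / ordLeq.\<close>

definition supp :: "('a \<Rightarrow> int) \<Rightarrow> 'a set" where
  "supp x = {\<xi>. x \<xi> \<noteq> 0}"

definition Pgrp :: "'a set \<Rightarrow> 'c rel \<Rightarrow> ('a \<Rightarrow> int) set" where
  "Pgrp K \<alpha> = {x. (\<forall>\<xi>. \<xi> \<notin> K \<longrightarrow> x \<xi> = 0) \<and> (card_of (supp x), \<alpha>) \<in> ordLess}"

definition unitvec :: "'a \<Rightarrow> 'a \<Rightarrow> int" where
  "unitvec \<xi> = (\<lambda>\<eta>. if \<eta> = \<xi> then 1 else 0)"

end

theory Submission imports Defs "HOL-Library.Countable_Set_Type" begin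

unbundle cardinal_syntax

primrec seqa :: "((nat \<Rightarrow> int) \<Rightarrow> int) \<Rightarrow> nat \<Rightarrow> int" where
  "seqa H 0 = 1"
| "seqa H (Suc n) = seqa H n * (\<bar>H (\<lambda>m. if m = n then 1 else 0)\<bar> + 1)"

lemma seqa_pos: "seqa H n > 0"
  by (induction n) (auto intro: mult_pos_pos)

lemma seqa_dvd: "m \<le> n \<Longrightarrow> seqa H m dvd seqa H n"
proof (induction n rule: dec_induct)
  case base then show ?case by simp
next
  case (step n) then show ?case by (simp add: dvd_mult2)
qed

lemma slender_aux:
  fixes H :: "(nat \<Rightarrow> int) \<Rightarrow> int"
  assumes add: "\<And>c d. H (\<lambda>n. c n + d n) = H c + H d"
  shows "\<exists>n. H (\<lambda>m. if m = n then 1 else 0) = 0"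
proof (rule ccontr)
  assume nz: "\<not> ?thesis"
  define \<delta> where "\<delta> n = (\<lambda>m::nat. if m = n then (1::int) else 0)" for n
  have nz': "H (\<delta> n) \<noteq> 0" for n using nz unfolding \<delta>_def by auto
  have H0: "H (\<lambda>_. 0) = 0" using add[of "\<lambda>_. 0" "\<lambda>_. 0"] by simp
  have Hnat: "H (\<lambda>n. int k * c n) = int k * H c" for k c
  proof (induction k)
    case 0 then show ?case using H0 by simp
  next
    case (Suc k)
    have "(\<lambda>n. int (Suc k) * c n) = (\<lambda>n. int k * c n + c n)" by (auto simp: algebra_simps)
    then show ?case using add[of "\<lambda>n. int k * c n" c] Suc by (simp add: algebra_simps)
  qed
  have Hneg: "H (\<lambda>n. - c n) = - H c" for c
    using add[of c "\<lambda>n. - c n"] H0 by simp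
  have Hmult: "H (\<lambda>n. k * c n) = k * H c" for k c
  proof (cases "k \<ge> 0")
    case True then have "k = int (nat k)" by simp
    then show ?thesis using Hnat[of "nat k" c] by metis
  next
    case False then have k: "k = - int (nat (-k))" by simp
    have "H (\<lambda>n. k * c n) = H (\<lambda>n. - (int (nat (-k)) * c n))"
      by (subst k) simp
    also have "\<dots> = - (int (nat (-k)) * H c)" using Hneg[of "\<lambda>n. int (nat (-k)) * c n"] Hnat[of "nat (-k)" c] by (simp only:)
    finally show ?thesis using k by simp
  qed
  define a where "a = seqa H"
  define X where "X A = (\<lambda>n. if n \<in> A then a n else 0)" for A :: "nat set"
  have "inj (\<lambda>A. H (X A))"
  proof (rule injI)
    fix A B assume eq: "H (X A) = H (X B)"
    show "A = B"
    proof (rule ccontr)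
      assume "A \<noteq> B"
      then have ex: "\<exists>n. (n \<in> A) \<noteq> (n \<in> B)" by blast
      define m where "m = (LEAST n. (n \<in> A) \<noteq> (n \<in> B))"
      have mdiff: "(m \<in> A) \<noteq> (m \<in> B)" unfolding m_def using LeastI_ex[OF ex] .
      have below: "n < m \<Longrightarrow> (n \<in> A) = (n \<in> B)" for n
        unfolding m_def using not_less_Least by blast
      define d where "d = (\<lambda>n. X A n + - X B n)"
      have Hd: "H d = 0" unfolding d_def using add[of "X A" "\<lambda>n. - X B n"] Hneg[of "X B"] eq by (simp only:)
      define w where "w = (\<lambda>n. if m < n then d n div a (Suc m) else 0)"
      define s where "s = d m"
      have s_abs: "\<bar>s\<bar> = a m" using mdiff seqa_pos[of H m]
        unfolding s_def d_def X_def a_def by auto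
      have decomp: "d = (\<lambda>n. s * \<delta> m n + a (Suc m) * w n)"
      proof
        fix n
        consider "n < m" | "n = m" | "m < n" by linarith
        then show "d n = s * \<delta> m n + a (Suc m) * w n"
        proof cases
          case 1 then show ?thesis using below[OF 1]
            unfolding d_def w_def \<delta>_def X_def by auto
        next
          case 2 then show ?thesis unfolding s_def w_def \<delta>_def by auto
        next
          case 3
          have "a (Suc m) dvd a n" unfolding a_def using 3 seqa_dvd[of "Suc m" n] by simp
          then have "a (Suc m) dvd d n" unfolding d_def X_def by auto
          then show ?thesis using 3 unfolding w_def \<delta>_def by auto
        qed
      qed
      have "H d = H (\<lambda>n. s * \<delta> m n) + H (\<lambda>n. a (Suc m) * w n)"
        by (subst decomp) (rule add)
      also have "\<dots> = s * H (\<delta> m) + a (Suc m) * H w"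
        by (simp only: Hmult)
      finally have "H d = s * H (\<delta> m) + a (Suc m) * H w" .
      then have "s * H (\<delta> m) = a (Suc m) * (- H w)" using Hd by (simp add: algebra_simps)
      then have dv: "a (Suc m) dvd s * H (\<delta> m)" by (rule dvdI)
      have ne: "s * H (\<delta> m) \<noteq> 0" using nz' s_abs seqa_pos[of H m] unfolding a_def by auto
      have "\<bar>a (Suc m)\<bar> \<le> \<bar>s * H (\<delta> m)\<bar>" using dvd_imp_le_int[OF ne dv] .
      moreover have "\<bar>s * H (\<delta> m)\<bar> = a m * \<bar>H (\<delta> m)\<bar>" using s_abs by (simp add: abs_mult)
      moreover have "a (Suc m) = a m * \<bar>H (\<delta> m)\<bar> + a m" unfolding a_def \<delta>_def
        by (simp add: algebra_simps)
      moreover have "a m > 0" unfolding a_def by (rule seqa_pos)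
      ultimately show False by simp
    qed
  qed
  then have "inj (to_nat \<circ> (\<lambda>A. H (X A)))" by (simp add: inj_compose)
  then have "surj (inv (to_nat \<circ> (\<lambda>A. H (X A))))" by (rule inj_imp_surj_inv)
  then show False using Cantors_theorem[of "UNIV :: nat set"] by auto
qed

lemma fin_le_inf:
  assumes "finite A" and "\<not>finite B"
  shows "|A| \<le>o |B|"
  by (meson assms card_of_Well_order card_of_ordLeq_finite not_ordLeq_iff_ordLess ordLess_imp_ordLeq)

lemma Pgrp_countable:
  assumes "(natLeq, \<alpha>) \<in> ordLess" "countable (supp x)" "\<forall>\<xi>. \<xi> \<notin> K \<longrightarrow> x \<xi> = 0"
  shows "x \<in> Pgrp K \<alpha>"
proof -
  have "|supp x| \<le>o natLeq" using assms(2) countable_card_le_natLeq by blast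
  then have "|supp x| <o \<alpha>" using assms(1) ordLeq_ordLess_trans by blast
  then show ?thesis using assms(3) unfolding Pgrp_def by blast
qed

theorem mainTheorem9:
  fixes K :: "'a set" and L :: "'b set" and \<alpha> :: "'c rel" and \<beta> :: "'d rel"
    and j :: "('a \<Rightarrow> int) \<Rightarrow> ('b \<Rightarrow> int)"
  assumes "infinite K" and "infinite L"
    and "Card_order \<alpha>" and "(\<alpha>, cardSuc (card_of K)) \<in> ordLeq" and "(natLeq, \<alpha>) \<in> ordLess"
    and "Card_order \<beta>" and "(\<beta>, cardSuc (card_of L)) \<in> ordLeq" and "(natLeq, \<beta>) \<in> ordLeq"
    and "j ` Pgrp K \<alpha> \<subseteq> Pgrp L \<beta>"
    and "\<And>x y. x \<in> Pgrp K \<alpha> \<Longrightarrow> y \<in> Pgrp K \<alpha> \<Longrightarrow> j (\<lambda>\<xi>. x \<xi> + y \<xi>) = (\<lambda>\<nu>. j x \<nu> + j y \<nu>)"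
    and "inj_on j (Pgrp K \<alpha>)"
  shows "(\<forall>\<nu>\<in>L. finite {\<xi>\<in>K. j (unitvec \<xi>) \<nu> \<noteq> 0})
       \<and> (card_of K, card_of {\<nu>\<in>L. {\<xi>\<in>K. j (unitvec \<xi>) \<nu> \<noteq> 0} \<noteq> {}}) \<in> ordLeq
       \<and> (card_of K, card_of L) \<in> ordLeq"
proof -
  note hom = assms(10)
  define F where "F \<nu> = {\<xi>\<in>K. j (unitvec \<xi>) \<nu> \<noteq> 0}" for \<nu>
  have zeroP: "(\<lambda>_. 0) \<in> Pgrp K \<alpha>"
    by (rule Pgrp_countable[OF assms(5)]) (auto simp: supp_def)
  have unitP: "unitvec \<xi> \<in> Pgrp K \<alpha>" if "\<xi> \<in> K" for \<xi>
  proof (rule Pgrp_countable[OF assms(5)])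
    have "supp (unitvec \<xi>) = {\<xi>}" by (auto simp: supp_def unitvec_def)
    then show "countable (supp (unitvec \<xi>))" by simp
    show "\<forall>\<eta>. \<eta> \<notin> K \<longrightarrow> unitvec \<xi> \<eta> = 0" using that by (auto simp: unitvec_def)
  qed
  have j0: "j (\<lambda>_. 0) = (\<lambda>_. 0)"
  proof -
    have "j (\<lambda>_. 0) = (\<lambda>\<nu>. j (\<lambda>_. 0) \<nu> + j (\<lambda>_. 0) \<nu>)"
      using hom[OF zeroP zeroP] by simp
    then show ?thesis by (metis add_cancel_left_right)
  qed
  have je: "j (unitvec \<xi>) \<noteq> (\<lambda>_. 0)" if "\<xi> \<in> K" for \<xi>
  proof
    assume "j (unitvec \<xi>) = (\<lambda>_. 0)"
    then have "unitvec \<xi> = (\<lambda>_. 0)" using inj_onD[OF assms(11) _ unitP[OF that] zeroP] j0 by simp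
    then show False unfolding unitvec_def by (metis zero_neq_one)
  qed
  have part1: "finite (F \<nu>)" if "\<nu> \<in> L" for \<nu>
  proof (rule ccontr)
    assume "infinite (F \<nu>)"
    then obtain f :: "nat \<Rightarrow> 'a" where f: "inj f" "range f \<subseteq> F \<nu>"
      using infinite_countable_subset by blast
    have fK: "range f \<subseteq> K" using f(2) unfolding F_def by auto
    define vec where "vec c = (\<lambda>\<eta>. if \<eta> \<in> range f then c (inv f \<eta>) else (0::int))" for c :: "nat \<Rightarrow> int"
    have vecP: "vec c \<in> Pgrp K \<alpha>" for c
    proof (rule Pgrp_countable[OF assms(5)])
      have "supp (vec c) \<subseteq> range f" unfolding supp_def vec_def by auto
      then show "countable (supp (vec c))" by (rule countable_subset) simp
      show "\<forall>\<eta>. \<eta> \<notin> K \<longrightarrow> vec c \<eta> = 0" using fK unfolding vec_def by auto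
    qed
    have vecadd: "vec (\<lambda>n. c n + d n) = (\<lambda>\<eta>. vec c \<eta> + vec d \<eta>)" for c d
      by (auto simp: vec_def)
    define H where "H c = j (vec c) \<nu>" for c
    have "H (\<lambda>n. c n + d n) = H c + H d" for c d
      unfolding H_def vecadd hom[OF vecP vecP] by simp
    then obtain n where n: "H (\<lambda>m. if m = n then 1 else 0) = 0"
      using slender_aux by blast
    have "vec (\<lambda>m. if m = n then 1 else 0) = unitvec (f n)"
    proof
      fix \<eta>
      show "vec (\<lambda>m. if m = n then 1 else 0) \<eta> = unitvec (f n) \<eta>"
      proof (cases "\<eta> \<in> range f")
        case True
        then obtain k where k: "\<eta> = f k" by blast
        then show ?thesis using f(1) by (auto simp: vec_def unitvec_def inj_eq)
      next
        case False
        then show ?thesis by (auto simp: vec_def unitvec_def)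
      qed
    qed
    then have "j (unitvec (f n)) \<nu> = 0" using n unfolding H_def by simp
    moreover have "f n \<in> F \<nu>" using f(2) by blast
    ultimately show False unfolding F_def by simp
  qed
  define N where "N = {\<nu>\<in>L. F \<nu> \<noteq> {}}"
  have KU: "K \<subseteq> (\<Union>\<nu>\<in>N. F \<nu>)"
  proof
    fix \<xi> assume xi: "\<xi> \<in> K"
    obtain \<nu> where nu: "j (unitvec \<xi>) \<nu> \<noteq> 0" using je[OF xi] by blast
    have "j (unitvec \<xi>) \<in> Pgrp L \<beta>" using assms(9) unitP[OF xi] by blast
    then have "\<nu> \<in> L" using nu unfolding Pgrp_def by blast
    moreover have "\<xi> \<in> F \<nu>" using xi nu unfolding F_def by simp
    ultimately show "\<xi> \<in> (\<Union>\<nu>\<in>N. F \<nu>)" unfolding N_def by blast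
  qed
  have NL: "N \<subseteq> L" unfolding N_def by blast
  have Ninf: "infinite N"
  proof
    assume "finite N"
    moreover have "\<forall>\<nu>\<in>N. finite (F \<nu>)" using part1 NL by blast
    ultimately have "finite (\<Union>\<nu>\<in>N. F \<nu>)" by auto
    then show False using KU assms(1) finite_subset by blast
  qed
  have "\<forall>\<nu>\<in>N. |F \<nu>| \<le>o |N|"
    using part1 NL Ninf fin_le_inf by blast
  then have "|\<Union>\<nu>\<in>N. F \<nu>| \<le>o |N|"
    by (rule card_of_UNION_ordLeq_infinite[OF Ninf ordLeq_refl[OF card_of_Card_order]])
  then have KN: "|K| \<le>o |N|" using card_of_mono1[OF KU] ordLeq_transitive by blast
  have "|K| \<le>o |L|" using KN card_of_mono1[OF NL] ordLeq_transitive by blast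
  then show ?thesis using part1 KN unfolding F_def N_def by blast
qed

end
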